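(* Let $e,f$ be essential edges of a multigraph $H$, and let $W$ be any walk in $H$ that starts with $e$, ends with $f$, and traverses every edge at most once. Then every edge traversed by $W$ is essential.
   Context: Multigraphs are undirected and may contain parallel edges and self-loops (a self-loop is a cycle of length one, two parallel edges form a cycle of length two). An edge $e$ of $H$ is essential if it lies on a cycle of $H$, or it is a bridge whose removal creates two new connected components each of which contains a cycle. *)

theory Defs
  imports Main
begin

text \<open>A multigraph is given by a vertex set V, an edge set E (edge names, so parallel
edges are allowed) and an incidence map inc assigning to each edge its set of
end vertices (one vertex for a self-loop, two for an ordinary edge).\<close>

definition multigraph :: "'v set \<Rightarrow> 'e set \<Rightarrow> ('e \<Rightarrow> 'v set) \<Rightarrow> bool" where
  "multigraph V E inc \<longleftrightarrow> finite V \<and> finite E \<and>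
     (\<forall>e\<in>E. inc e \<subseteq> V \<and> 1 \<le> card (inc e) \<and> card (inc e) \<le> 2)"

definition walk :: "'v set \<Rightarrow> 'e set \<Rightarrow> ('e \<Rightarrow> 'v set) \<Rightarrow> 'v list \<Rightarrow> 'e list \<Rightarrow> bool" where
  "walk V E inc vs es \<longleftrightarrow> length vs = length es + 1 \<and> set vs \<subseteq> V \<and> set es \<subseteq> E \<and>
     (\<forall>i<length es. inc (es ! i) = {vs ! i, vs ! Suc i})"

definition reach :: "'v set \<Rightarrow> 'e set \<Rightarrow> ('e \<Rightarrow> 'v set) \<Rightarrow> 'v \<Rightarrow> 'v \<Rightarrow> bool" where
  "reach V E inc u w \<longleftrightarrow> (\<exists>vs es. walk V E inc vs es \<and> hd vs = u \<and> last vs = w)"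

text \<open>A cycle: closed walk with at least one edge, no repeated edge and no repeated
vertex other than start = end (self-loops are cycles of length 1, two parallel
edges form a cycle of length 2).\<close>
definition is_cycle :: "'v set \<Rightarrow> 'e set \<Rightarrow> ('e \<Rightarrow> 'v set) \<Rightarrow> 'v list \<Rightarrow> 'e list \<Rightarrow> bool" where
  "is_cycle V E inc vs es \<longleftrightarrow> walk V E inc vs es \<and> es \<noteq> [] \<and> distinct es \<and>
     hd vs = last vs \<and> distinct (tl vs)"

definition on_cycle :: "'v set \<Rightarrow> 'e set \<Rightarrow> ('e \<Rightarrow> 'v set) \<Rightarrow> 'e \<Rightarrow> bool" where
  "on_cycle V E inc e \<longleftrightarrow> (\<exists>vs es. is_cycle V E inc vs es \<and> e \<in> set es)"

definition component_has_cycle :: "'v set \<Rightarrow> 'e set \<Rightarrow> ('e \<Rightarrow> 'v set) \<Rightarrow> 'v \<Rightarrow> bool" where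
  "component_has_cycle V E inc u \<longleftrightarrow>
     (\<exists>vs es. is_cycle V E inc vs es \<and> (\<forall>w\<in>set vs. reach V E inc u w))"

definition is_bridge :: "'v set \<Rightarrow> 'e set \<Rightarrow> ('e \<Rightarrow> 'v set) \<Rightarrow> 'e \<Rightarrow> bool" where
  "is_bridge V E inc e \<longleftrightarrow> e \<in> E \<and>
     (\<exists>u v. inc e = {u, v} \<and> \<not> reach V (E - {e}) inc u v)"

definition essential :: "'v set \<Rightarrow> 'e set \<Rightarrow> ('e \<Rightarrow> 'v set) \<Rightarrow> 'e \<Rightarrow> bool" where
  "essential V E inc e \<longleftrightarrow> e \<in> E \<and>
     (on_cycle V E inc e \<or>
      (is_bridge V E inc e \<and>
       (\<forall>u v. inc e = {u, v} \<longrightarrow>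
          component_has_cycle V (E - {e}) inc u \<and> component_has_cycle V (E - {e}) inc v)))"

end

theory Submission
  imports Defs
begin

definition adj :: "('e \<Rightarrow> 'v set) \<Rightarrow> 'e set \<Rightarrow> 'v \<Rightarrow> 'v \<Rightarrow> bool" where
  "adj inc S x y \<longleftrightarrow> (\<exists>h\<in>S. inc h = {x, y})"

lemma adj_sym: "adj inc S x y \<Longrightarrow> adj inc S y x"
  unfolding adj_def by (auto simp: insert_commute)

lemma R_sym: "(adj inc S)\<^sup>*\<^sup>* x y \<Longrightarrow> (adj inc S)\<^sup>*\<^sup>* y x"
proof (induction rule: rtranclp_induct)
  case base then show ?case by simp
next
  case (step y z)
  then show ?case by (meson adj_sym converse_rtranclp_into_rtranclp)
qed

lemma adj_mono: "adj inc S x y \<Longrightarrow> S \<subseteq> T \<Longrightarrow> adj inc T x y"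
  unfolding adj_def by auto

lemma R_mono: "(adj inc S)\<^sup>*\<^sup>* x y \<Longrightarrow> S \<subseteq> T \<Longrightarrow> (adj inc T)\<^sup>*\<^sup>* x y"
proof (induction rule: rtranclp_induct)
  case base then show ?case by simp
next
  case (step y z)
  then show ?case by (meson adj_mono rtranclp.rtrancl_into_rtrancl)
qed

lemma R_first:
  assumes "(adj inc S)\<^sup>*\<^sup>* x y"
  shows "(adj inc (S - {g}))\<^sup>*\<^sup>* x y \<or> (\<exists>c\<in>inc g. (adj inc (S - {g}))\<^sup>*\<^sup>* x c)"
  using assms
proof (induction rule: rtranclp_induct)
  case base then show ?case by simp
next
  case (step y z)
  then obtain h where h: "h \<in> S" "inc h = {y, z}" unfolding adj_def by auto
  show ?case
  proof (cases "h = g")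
    case True
    then show ?thesis using step h by auto
  next
    case False
    then have "adj inc (S - {g}) y z" using h unfolding adj_def by auto
    then show ?thesis using step.IH by (meson rtranclp.rtrancl_into_rtrancl)
  qed
qed

lemma walk_Nil: "walk V E inc vs [] \<longleftrightarrow> (\<exists>v. vs = [v] \<and> v \<in> V)"
  unfolding walk_def by (cases vs) auto

lemma walk_Cons: "walk V E inc vs (h # es) \<longleftrightarrow>
   (\<exists>v vs'. vs = v # vs' \<and> v \<in> V \<and> h \<in> E \<and> inc h = {v, hd vs'} \<and> walk V E inc vs' es)"
proof
  assume w: "walk V E inc vs (h # es)"
  then obtain v vs' where vs: "vs = v # vs'" unfolding walk_def by (cases vs) auto
  have l: "length vs' = length es + 1" using w vs unfolding walk_def by auto
  then have "vs' \<noteq> []" by auto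
  then have "hd vs' = vs' ! 0" by (simp add: hd_conv_nth)
  moreover have "inc h = {vs ! 0, vs ! 1}" using w unfolding walk_def by fastforce
  moreover have "\<forall>i<length es. inc (es ! i) = {vs' ! i, vs' ! Suc i}"
  proof (intro allI impI)
    fix i assume "i < length es"
    then have "inc ((h#es) ! Suc i) = {vs ! Suc i, vs ! Suc (Suc i)}" using w unfolding walk_def by auto
    then show "inc (es ! i) = {vs' ! i, vs' ! Suc i}" using vs by simp
  qed
  ultimately show "\<exists>v vs'. vs = v # vs' \<and> v \<in> V \<and> h \<in> E \<and> inc h = {v, hd vs'} \<and> walk V E inc vs' es"
    using w vs l unfolding walk_def by auto
next
  assume "\<exists>v vs'. vs = v # vs' \<and> v \<in> V \<and> h \<in> E \<and> inc h = {v, hd vs'} \<and> walk V E inc vs' es"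
  then obtain v vs' where a: "vs = v # vs'" "v \<in> V" "h \<in> E" "inc h = {v, hd vs'}" "walk V E inc vs' es" by blast
  then have ne: "vs' \<noteq> []" unfolding walk_def by auto
  have "\<forall>i<length (h#es). inc ((h#es) ! i) = {vs ! i, vs ! Suc i}"
  proof (intro allI impI)
    fix i assume "i < length (h#es)"
    then show "inc ((h#es) ! i) = {vs ! i, vs ! Suc i}"
      using a ne unfolding walk_def by (cases i) (auto simp: hd_conv_nth)
  qed
  then show "walk V E inc vs (h # es)" using a unfolding walk_def by auto
qed

lemma walk_ne: "walk V E inc vs es \<Longrightarrow> vs \<noteq> []"
  unfolding walk_def by auto

lemma walk_mono: "walk V E inc vs es \<Longrightarrow> set es \<subseteq> E' \<Longrightarrow> walk V E' inc vs es"
  unfolding walk_def by auto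

lemma walk_drop: "walk V E inc vs es \<Longrightarrow> i \<le> length es \<Longrightarrow> walk V E inc (drop i vs) (drop i es)"
  unfolding walk_def by (auto dest: in_set_dropD)

lemma walk_take: "walk V E inc vs es \<Longrightarrow> i \<le> length es \<Longrightarrow> walk V E inc (take (Suc i) vs) (take i es)"
  unfolding walk_def by (auto dest: in_set_takeD)

lemma walk_rev: "walk V E inc vs es \<Longrightarrow> walk V E inc (rev vs) (rev es)"
  unfolding walk_def
proof (intro conjI allI impI; (elim conjE)?)
  fix i assume a: "length vs = length es + 1" "set vs \<subseteq> V" "set es \<subseteq> E"
    "\<forall>i<length es. inc (es ! i) = {vs ! i, vs ! Suc i}" "i < length (rev es)"
  then have "inc (es ! (length es - Suc i)) = {vs ! (length es - Suc i), vs ! Suc (length es - Suc i)}"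
    by auto
  then show "inc (rev es ! i) = {rev vs ! i, rev vs ! Suc i}"
    using a by (auto simp: rev_nth Suc_diff_Suc insert_commute)
qed auto

lemma walk_edge_inc: "walk V E inc vs es \<Longrightarrow> h \<in> set es \<Longrightarrow> inc h \<subseteq> set vs"
proof -
  assume w: "walk V E inc vs es" and h: "h \<in> set es"
  then obtain i where i: "i < length es" "es ! i = h" by (auto simp: in_set_conv_nth)
  then have "inc h = {vs ! i, vs ! Suc i}" using w unfolding walk_def by auto
  moreover have "Suc i < length vs" using w i unfolding walk_def by auto
  ultimately show "inc h \<subseteq> set vs" by auto
qed


lemma walk_R: "walk V S inc vs es \<Longrightarrow> x \<in> set vs \<Longrightarrow> (adj inc (set es))\<^sup>*\<^sup>* (hd vs) x"
proof (induction es arbitrary: vs)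
  case Nil
  then show ?case by (auto simp: walk_Nil)
next
  case (Cons h es)
  then obtain v vs' where a: "vs = v # vs'" "inc h = {v, hd vs'}" "walk V S inc vs' es"
    by (auto simp: walk_Cons)
  have ad: "adj inc (set (h#es)) v (hd vs')" using a unfolding adj_def by auto
  show ?case
  proof (cases "x = v")
    case True then show ?thesis using a by simp
  next
    case False
    then have "x \<in> set vs'" using Cons.prems a by auto
    then have "(adj inc (set es))\<^sup>*\<^sup>* (hd vs') x" using Cons.IH a by blast
    then have "(adj inc (set (h#es)))\<^sup>*\<^sup>* (hd vs') x" by (rule R_mono) auto
    then show ?thesis using ad a by (simp add: converse_rtranclp_into_rtranclp)
  qed
qed

lemma walk_R2: "walk V S inc vs es \<Longrightarrow> x \<in> set vs \<Longrightarrow> y \<in> set vs \<Longrightarrow> (adj inc (set es))\<^sup>*\<^sup>* x y"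
  by (meson R_sym rtranclp_trans walk_R)

lemma reach_iff:
  assumes "\<forall>h\<in>S. inc h \<subseteq> V"
  shows "reach V S inc u w \<longleftrightarrow> u \<in> V \<and> (adj inc S)\<^sup>*\<^sup>* u w"
proof
  assume "reach V S inc u w"
  then obtain vs es where w: "walk V S inc vs es" "hd vs = u" "last vs = w"
    unfolding reach_def by blast
  have "u \<in> V" using w walk_ne[OF w(1)] unfolding walk_def by (metis hd_in_set subsetD)
  moreover have "(adj inc (set es))\<^sup>*\<^sup>* u w" using walk_R[OF w(1), of w] w walk_ne[OF w(1)] last_in_set by metis
  then have "(adj inc S)\<^sup>*\<^sup>* u w" by (rule R_mono) (use w in \<open>auto simp: walk_def\<close>)
  ultimately show "u \<in> V \<and> (adj inc S)\<^sup>*\<^sup>* u w" by blast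
next
  assume "u \<in> V \<and> (adj inc S)\<^sup>*\<^sup>* u w"
  then have R: "(adj inc S)\<^sup>*\<^sup>* u w" and uV: "u \<in> V" by auto
  from R uV show "reach V S inc u w"
  proof (induction rule: converse_rtranclp_induct)
    case base
    then have "walk V S inc [w] []" by (simp add: walk_Nil)
    then show ?case unfolding reach_def by fastforce
  next
    case (step u y)
    then obtain h where h: "h \<in> S" "inc h = {u, y}" unfolding adj_def by auto
    then have "y \<in> V" using assms by auto
    then obtain vs es where w: "walk V S inc vs es" "hd vs = y" "last vs = w"
      using step unfolding reach_def by blast
    have "walk V S inc (u # vs) (h # es)" using w h step.prems by (auto simp: walk_Cons)
    then show ?case unfolding reach_def using w walk_ne[OF w(1)] by fastforce
  qed
qed

lemma walk_simple: "walk V S inc vs es \<Longrightarrow>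
  \<exists>vs' es'. walk V S inc vs' es' \<and> hd vs' = hd vs \<and> last vs' = last vs \<and> distinct vs' \<and> set es' \<subseteq> set es"
proof (induction es arbitrary: vs)
  case Nil
  then show ?case by (auto simp: walk_Nil)
next
  case (Cons h es)
  then obtain v vs' where a: "vs = v # vs'" "v \<in> V" "h \<in> S" "inc h = {v, hd vs'}" "walk V S inc vs' es"
    by (auto simp: walk_Cons)
  obtain ps pes where p: "walk V S inc ps pes" "hd ps = hd vs'" "last ps = last vs'" "distinct ps"
    "set pes \<subseteq> set es"
    using Cons.IH[OF a(5)] by blast
  have psne: "ps \<noteq> []" using walk_ne[OF p(1)] .
  have vsne: "vs' \<noteq> []" using walk_ne[OF a(5)] .
  show ?case
  proof (cases "v \<in> set ps")
    case False
    have "walk V S inc (v # ps) (h # pes)" using a p by (auto simp: walk_Cons)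
    then show ?thesis using False p a psne vsne by (intro exI[of _ "v # ps"] exI[of _ "h # pes"]) auto
  next
    case True
    then obtain xs ys where xy: "ps = xs @ v # ys" by (meson split_list)
    have len: "length ps = length pes + 1" using p(1) unfolding walk_def by auto
    have "length xs \<le> length pes" using len xy by auto
    then have "walk V S inc (drop (length xs) ps) (drop (length xs) pes)" using walk_drop p(1) by blast
    moreover have "drop (length xs) ps = v # ys" using xy by simp
    moreover have "set (drop (length xs) pes) \<subseteq> set (h # es)" using p(5) by (auto dest: in_set_dropD)
    moreover have "last (v # ys) = last vs" using xy p(3) a vsne by simp
    moreover have "distinct (v # ys)" using p(4) xy by simp
    ultimately show ?thesis using a by (metis list.sel(1))
  qed
qed

lemma walk_distinct_edges: "walk V S inc vs es \<Longrightarrow> distinct vs \<Longrightarrow> distinct es"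
proof (induction es arbitrary: vs)
  case Nil then show ?case by simp
next
  case (Cons h es)
  then obtain v vs' where a: "vs = v # vs'" "inc h = {v, hd vs'}" "walk V S inc vs' es"
    by (auto simp: walk_Cons)
  have "h \<notin> set es"
  proof
    assume "h \<in> set es"
    then have "inc h \<subseteq> set vs'" using walk_edge_inc[OF a(3)] by blast
    then show False using a Cons.prems by auto
  qed
  then show ?case using Cons a by auto
qed


lemma distinct_nth_notin_take: "distinct xs \<Longrightarrow> k < length xs \<Longrightarrow> xs ! k \<notin> set (take k xs)"
  by (auto simp: in_set_conv_nth nth_eq_iff_index_eq)

lemma side:
  assumes mg: "multigraph V E inc" and ess: "essential V E inc e"
    and w: "walk V E inc vs es" and d: "distinct es" and ne: "es \<noteq> []" and he: "hd es = e"
    and k: "k < length es" and ge: "es ! k \<noteq> e"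
    and nc: "\<not> on_cycle V E inc (es ! k)"
    and nr: "\<not> (adj inc (E - {es ! k}))\<^sup>*\<^sup>* (vs ! k) (vs ! Suc k)"
  shows "component_has_cycle V (E - {es ! k}) inc (vs ! k)"
proof -
  define g where "g = es ! k"
  define a where "a = vs ! k"
  define b where "b = vs ! Suc k"
  have e0: "es ! 0 = e" using ne he by (simp add: hd_conv_nth)
  have k1: "0 < k" using ge e0 by (cases k) auto
  have lvs: "length vs = length es + 1" using w unfolding walk_def by auto
  have incV: "\<forall>h\<in>S. inc h \<subseteq> V" if "S \<subseteq> E" for S using mg that unfolding multigraph_def by auto
  have vsV: "set vs \<subseteq> V" and esE: "set es \<subseteq> E" using w unfolding walk_def by auto
  have aV: "a \<in> V" using vsV lvs k unfolding a_def by (metis add_less_cancel_right less_SucI nth_mem subsetD Suc_eq_plus1)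
  have eE: "e \<in> E" using ess unfolding essential_def by auto
  have ince: "inc e = {vs ! 0, vs ! 1}" using w ne e0 unfolding walk_def by fastforce
  have incg: "inc g = {a, b}" using w k unfolding walk_def g_def a_def b_def by auto
  have gE: "g \<in> E" using esE k unfolding g_def by auto
  have wt: "walk V E inc (take (Suc k) vs) (take k es)" using walk_take[OF w, of k] k by simp
  have gnt: "g \<notin> set (take k es)" using distinct_nth_notin_take[OF d k] g_def by simp
  have tE: "set (take k es) \<subseteq> E - {g}" using gnt esE by (auto dest: in_set_takeD)
  have P1: "(adj inc (E - {g}))\<^sup>*\<^sup>* (vs ! 0) a"
  proof -
    have "(adj inc (set (take k es)))\<^sup>*\<^sup>* (take (Suc k) vs ! 0) (take (Suc k) vs ! k)"
      by (rule walk_R2[OF wt]) (rule nth_mem; simp add: lvs k)+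
    then show ?thesis using tE unfolding a_def by (auto intro: R_mono)
  qed
  have wt2: "walk V E inc (drop 1 (take (Suc k) vs)) (drop 1 (take k es))"
    using walk_drop[OF wt] k1 k by simp
  have P2: "(adj inc (E - {e} - {g}))\<^sup>*\<^sup>* (vs ! 1) a"
  proof -
    have "(adj inc (set (drop 1 (take k es))))\<^sup>*\<^sup>* (drop 1 (take (Suc k) vs) ! 0) (drop 1 (take (Suc k) vs) ! (k - 1))"
      by (rule walk_R2[OF wt2]) (rule nth_mem; simp add: lvs k k1)+
    moreover have "drop 1 (take (Suc k) vs) ! 0 = vs ! 1" using k1 lvs k by auto
    moreover have "drop 1 (take (Suc k) vs) ! (k - 1) = a" using k1 lvs k unfolding a_def by auto
    moreover have "set (drop 1 (take k es)) \<subseteq> E - {e} - {g}"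
    proof -
      have dt: "distinct (take k es)" using d by simp
      have "take k es \<noteq> []" "hd (take k es) = e" using k1 ne e0 k by (auto simp: hd_conv_nth)
      then have "e \<notin> set (tl (take k es))" using dt by (metis distinct.simps(2) list.collapse)
      moreover have "set (tl (take k es)) \<subseteq> set (take k es)" by (cases "take k es") auto
      ultimately show ?thesis using tE by (auto simp: drop_Suc)
    qed
    ultimately show ?thesis by (auto intro: R_mono)
  qed
  have ng: "g \<notin> set ces" if "is_cycle V E inc cvs ces" for cvs ces
    using nc that unfolding on_cycle_def g_def by blast
  have cycg: "is_cycle V (E - {g}) inc cvs ces" if "is_cycle V E inc cvs ces" for cvs ces
  proof -
    have "set ces \<subseteq> E - {g}" using ng[OF that] that unfolding is_cycle_def walk_def by auto
    then show ?thesis using that walk_mono unfolding is_cycle_def by blast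
  qed
  have incVg: "\<forall>h\<in>E - {g}. inc h \<subseteq> V" using incV by blast
  from ess consider (cyc) "on_cycle V E inc e" | (br) "is_bridge V E inc e"
    "\<forall>u v. inc e = {u, v} \<longrightarrow> component_has_cycle V (E - {e}) inc u \<and> component_has_cycle V (E - {e}) inc v"
    unfolding essential_def by blast
  then have "component_has_cycle V (E - {g}) inc a"
  proof cases
    case cyc
    then obtain cvs ces where c: "is_cycle V E inc cvs ces" "e \<in> set ces" unfolding on_cycle_def by blast
    have cw: "walk V E inc cvs ces" using c unfolding is_cycle_def by auto
    have v0: "vs ! 0 \<in> set cvs" using walk_edge_inc[OF cw c(2)] ince by auto
    have sc: "set ces \<subseteq> E - {g}" using ng[OF c(1)] cw unfolding walk_def by auto
    have "reach V (E - {g}) inc a x" if "x \<in> set cvs" for x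
    proof -
      have "(adj inc (set ces))\<^sup>*\<^sup>* (vs ! 0) x" using walk_R2[OF cw v0 that] .
      then have "(adj inc (E - {g}))\<^sup>*\<^sup>* (vs ! 0) x" using sc by (auto intro: R_mono)
      then have "(adj inc (E - {g}))\<^sup>*\<^sup>* a x" using R_sym[OF P1] by (meson rtranclp_trans)
      then show ?thesis using reach_iff[OF incVg] aV by blast
    qed
    then show ?thesis using cycg[OF c(1)] unfolding component_has_cycle_def by blast
  next
    case br
    obtain u v where uv: "inc e = {u, v}" "\<not> reach V (E - {e}) inc u v" using br(1) unfolding is_bridge_def by blast
    have incVe: "\<forall>h\<in>E - {e}. inc h \<subseteq> V" using incV by blast
    have incVeg: "\<forall>h\<in>E - {e} - {g}. inc h \<subseteq> V" using incV by blast
    have uV: "u \<in> V" "v \<in> V" using uv(1) incV[of E] eE by auto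
    have nR01: "\<not> (adj inc (E - {e}))\<^sup>*\<^sup>* (vs ! 0) (vs ! 1)"
    proof
      assume R: "(adj inc (E - {e}))\<^sup>*\<^sup>* (vs ! 0) (vs ! 1)"
      have "(adj inc (E - {e}))\<^sup>*\<^sup>* u v"
        using uv(1) ince R R_sym[OF R] by (auto simp: doubleton_eq_iff)
      then show False using uv(2) reach_iff[OF incVe] uV by blast
    qed
    have "component_has_cycle V (E - {e}) inc (vs ! 0)" using br(2) ince by blast
    then obtain cvs ces where c: "is_cycle V (E - {e}) inc cvs ces"
      "\<forall>x\<in>set cvs. reach V (E - {e}) inc (vs ! 0) x"
      unfolding component_has_cycle_def by blast
    have cE: "is_cycle V E inc cvs ces" using c(1) walk_mono unfolding is_cycle_def walk_def by auto
    have cw: "walk V E inc cvs ces" using cE unfolding is_cycle_def by auto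
    have sc: "set ces \<subseteq> E - {g}" using ng[OF cE] cw unfolding walk_def by auto
    have cne: "cvs \<noteq> []" using walk_ne[OF cw] .
    have "(adj inc (E - {e}))\<^sup>*\<^sup>* (vs ! 0) (hd cvs)" using c(2) cne reach_iff[OF incVe] by auto
    from R_first[OF this, of g]
    have R0: "(adj inc (E - {g}))\<^sup>*\<^sup>* (vs ! 0) (hd cvs)"
    proof
      assume "(adj inc (E - {e} - {g}))\<^sup>*\<^sup>* (vs ! 0) (hd cvs)"
      then show ?thesis by (rule R_mono) auto
    next
      assume "\<exists>c\<in>inc g. (adj inc (E - {e} - {g}))\<^sup>*\<^sup>* (vs ! 0) c"
      then obtain c where cc: "c \<in> {a, b}" "(adj inc (E - {e} - {g}))\<^sup>*\<^sup>* (vs ! 0) c" using incg by auto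
      show ?thesis
      proof (cases "c = a")
        case True
        have "(adj inc (E - {e}))\<^sup>*\<^sup>* (vs ! 0) a" using cc True by (auto intro: R_mono)
        moreover have "(adj inc (E - {e}))\<^sup>*\<^sup>* a (vs ! 1)" using R_sym[OF P2] by (auto intro: R_mono)
        ultimately show ?thesis using nR01 by (meson rtranclp_trans)
      next
        case False
        then have cb: "c = b" using cc by auto
        have 1: "(adj inc (E - {g}))\<^sup>*\<^sup>* (vs ! 0) b" using cc cb by (auto intro: R_mono)
        have 2: "(adj inc (E - {g}))\<^sup>*\<^sup>* a (vs ! 1)" using R_sym[OF P2] by (auto intro: R_mono)
        have "adj inc (E - {g}) (vs ! 1) (vs ! 0)" using ince eE ge g_def unfolding adj_def
          by (auto simp: insert_commute)
        then have "(adj inc (E - {g}))\<^sup>*\<^sup>* a b" using 1 2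
          by (meson converse_rtranclp_into_rtranclp rtranclp_trans)
        then show ?thesis using nr unfolding g_def a_def b_def by blast
      qed
    qed
    have "reach V (E - {g}) inc a x" if "x \<in> set cvs" for x
    proof -
      have "(adj inc (set ces))\<^sup>*\<^sup>* (hd cvs) x" using walk_R[OF cw that] .
      then have "(adj inc (E - {g}))\<^sup>*\<^sup>* (hd cvs) x" using sc by (auto intro: R_mono)
      then have "(adj inc (E - {g}))\<^sup>*\<^sup>* a x" using R_sym[OF P1] R0 by (meson rtranclp_trans)
      then show ?thesis using reach_iff[OF incVg] aV by blast
    qed
    then show ?thesis using cycg[OF cE] unfolding component_has_cycle_def by blast
  qed
  then show ?thesis unfolding g_def a_def .
qed


theorem lemma5p2:
  fixes V :: "'v set" and E :: "'e set" and inc :: "'e \<Rightarrow> 'v set"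
  assumes "multigraph V E inc"
    and "essential V E inc e" and "essential V E inc f"
    and "walk V E inc vs es" and "es \<noteq> []" and "hd es = e" and "last es = f"
    and "distinct es"
  shows "\<forall>g\<in>set es. essential V E inc g"
proof
  fix g assume "g \<in> set es"
  then obtain k where k: "k < length es" "es ! k = g" by (auto simp: in_set_conv_nth)
  note mg = assms(1) and w = assms(4) and d = assms(8)
  have lvs: "length vs = length es + 1" using w unfolding walk_def by auto
  have incV: "\<forall>h\<in>S. inc h \<subseteq> V" if "S \<subseteq> E" for S using mg that unfolding multigraph_def by auto
  have incVg: "\<forall>h\<in>E - {g}. inc h \<subseteq> V" using incV by blast
  have gE: "g \<in> E" using w k unfolding walk_def by auto
  define a where "a = vs ! k"
  define b where "b = vs ! Suc k"
  have incg: "inc g = {a, b}" using w k unfolding walk_def a_def b_def by auto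
  have aV: "a \<in> V" "b \<in> V" using incg incV[of E] gE by auto
  show "essential V E inc g"
  proof (cases "g = e \<or> g = f \<or> on_cycle V E inc g")
    case True
    then show ?thesis using assms(2,3) gE unfolding essential_def by auto
  next
    case False
    then have ge: "g \<noteq> e" "g \<noteq> f" and nc: "\<not> on_cycle V E inc g" by auto
    have nr: "\<not> (adj inc (E - {g}))\<^sup>*\<^sup>* a b"
    proof
      assume "(adj inc (E - {g}))\<^sup>*\<^sup>* a b"
      then have "reach V (E - {g}) inc a b" using reach_iff[OF incVg] aV by blast
      then obtain vs0 es0 where "walk V (E - {g}) inc vs0 es0" "hd vs0 = a" "last vs0 = b"
        unfolding reach_def by blast
      then obtain ps pes where p: "walk V (E - {g}) inc ps pes" "hd ps = a" "last ps = b" "distinct ps"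
        using walk_simple by metis
      have pne: "ps \<noteq> []" using walk_ne[OF p(1)] .
      have sp: "set pes \<subseteq> E - {g}" using p(1) unfolding walk_def by auto
      have wp: "walk V E inc ps pes" using p(1) sp walk_mono by blast
      have "walk V E inc (b # ps) (g # pes)" using wp aV gE incg p(2)
        by (auto simp: walk_Cons insert_commute)
      moreover have "distinct (g # pes)" using sp walk_distinct_edges[OF p(1) p(4)] by auto
      ultimately have "is_cycle V E inc (b # ps) (g # pes)"
        unfolding is_cycle_def using p pne by auto
      then show False using nc unfolding on_cycle_def by fastforce
    qed
    have br: "is_bridge V E inc g"
      unfolding is_bridge_def using gE incg nr reach_iff[OF incVg] by blast
    have ca: "component_has_cycle V (E - {g}) inc a"
      using side[OF mg assms(2) w d assms(5) assms(6) k(1)] k ge nc nr unfolding a_def b_def by blast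
    define k' where "k' = length es - 1 - k"
    have k': "k' < length (rev es)" using k unfolding k'_def by auto
    have r1: "rev es ! k' = g" using k unfolding k'_def by (auto simp: rev_nth Suc_diff_Suc)
    have r2: "rev vs ! k' = b" using k lvs unfolding k'_def b_def by (auto simp: rev_nth Suc_diff_Suc)
    have r3: "rev vs ! Suc k' = a" using k lvs unfolding k'_def a_def by (auto simp: rev_nth Suc_diff_Suc)
    have hr: "hd (rev es) = f" using assms(5,7) by (simp add: hd_rev)
    have "component_has_cycle V (E - {rev es ! k'}) inc (rev vs ! k')"
      by (rule side[OF mg assms(3) walk_rev[OF w] _ _ hr])
         (use d assms(5) k' r1 r2 r3 ge nc R_sym[of inc "E - {g}" b a] nr in auto)
    then have cb: "component_has_cycle V (E - {g}) inc b" using r1 r2 by simp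
    have "\<forall>u v. inc g = {u, v} \<longrightarrow>
          component_has_cycle V (E - {g}) inc u \<and> component_has_cycle V (E - {g}) inc v"
      using incg ca cb by (auto simp: doubleton_eq_iff)
    then show ?thesis unfolding essential_def using gE br by blast
  qed
qed

end
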